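(* Let $\mathcal{D},\mathcal{T}$ be distributions over a finite set $X$, where $\mathcal{T}=\sum_{i=1}^kc_i\mathcal{T}_i$ is a convex combination of distributions $\mathcal{T}_1,\dots,\mathcal{T}_k$ on $X$ with $c_i>0$ and $\sum_ic_i=1$. Suppose $\|\mathcal{D}-\mathcal{T}_i\|_{\mathtt{TV}}=1-\varepsilon_i$ with $\varepsilon_i\in[0,1/2]$ for each $i$. Then \[ \|\mathcal{D}-\mathcal{T}\|_{\mathtt{TV}}\ \ge\ 1-\sum_{i=1}^k(1+c_i)\varepsilon_i. \]
   Context: Total variation distance: $\|\mathcal{D}_1-\mathcal{D}_2\|_{\mathtt{TV}}=\frac12\sum_{x}|\mathcal{D}_1(x)-\mathcal{D}_2(x)|=\max_{A}(\mathcal{D}_1(A)-\mathcal{D}_2(A))$. *)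

theory Defs
  imports Complex_Main
begin

definition is_distr :: "'a set \<Rightarrow> ('a \<Rightarrow> real) \<Rightarrow> bool" where
  "is_distr X D \<longleftrightarrow> (\<forall>x\<in>X. D x \<ge> 0) \<and> (\<Sum>x\<in>X. D x) = 1"

definition tv_dist :: "'a set \<Rightarrow> ('a \<Rightarrow> real) \<Rightarrow> ('a \<Rightarrow> real) \<Rightarrow> real" where
  "tv_dist X D1 D2 = (1/2) * (\<Sum>x\<in>X. \<bar>D1 x - D2 x\<bar>)"

end

theory Submission
  imports Defs
begin

lemma min_sum_le:
  fixes a :: real
  assumes "finite I" "a \<ge> 0" "\<And>i. i \<in> I \<Longrightarrow> 0 \<le> c i \<and> c i \<le> 1" "\<And>i. i \<in> I \<Longrightarrow> b i \<ge> 0"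
  shows "min a (\<Sum>i\<in>I. c i * b i) \<le> (\<Sum>i\<in>I. min a (b i))"
  using assms
proof (induction I rule: finite_induct)
  case empty
  then show ?case by simp
next
  case (insert j F)
  have IH: "min a (\<Sum>i\<in>F. c i * b i) \<le> (\<Sum>i\<in>F. min a (b i))" using insert by auto
  have cj: "0 \<le> c j" "c j \<le> 1" "b j \<ge> 0" using insert by auto
  have "c j * b j \<le> b j" using cj by (simp add: mult_left_le_one_le)
  moreover have "0 \<le> c j * b j" using cj by simp
  moreover have "0 \<le> (\<Sum>i\<in>F. c i * b i)" using insert by (intro sum_nonneg) auto
  ultimately have "min a (c j * b j + (\<Sum>i\<in>F. c i * b i)) \<le> min a (b j) + min a (\<Sum>i\<in>F. c i * b i)"
    using \<open>a \<ge> 0\<close> by (auto simp: min_def)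
  then show ?case using IH insert by simp
qed

theorem lemma3p3:
  fixes X :: "'a set" and D :: "'a \<Rightarrow> real" and T :: "nat \<Rightarrow> 'a \<Rightarrow> real"
    and c :: "nat \<Rightarrow> real" and eps :: "nat \<Rightarrow> real" and k :: nat
  assumes "finite X"
    and "is_distr X D"
    and "\<And>i. i \<in> {1..k} \<Longrightarrow> is_distr X (T i)"
    and "\<And>i. i \<in> {1..k} \<Longrightarrow> c i > 0"
    and "(\<Sum>i=1..k. c i) = 1"
    and "\<And>i. i \<in> {1..k} \<Longrightarrow> tv_dist X D (T i) = 1 - eps i"
    and "\<And>i. i \<in> {1..k} \<Longrightarrow> 0 \<le> eps i \<and> eps i \<le> 1/2"
  shows "tv_dist X D (\<lambda>x. \<Sum>i=1..k. c i * T i x) \<ge> 1 - (\<Sum>i=1..k. (1 + c i) * eps i)"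
proof -
  define S where "S x = (\<Sum>i=1..k. c i * T i x)" for x
  have Dn: "\<And>x. x \<in> X \<Longrightarrow> D x \<ge> 0" and D1: "(\<Sum>x\<in>X. D x) = 1"
    using assms(2) by (auto simp: is_distr_def)
  have Tn: "\<And>i x. i \<in> {1..k} \<Longrightarrow> x \<in> X \<Longrightarrow> T i x \<ge> 0"
    and T1: "\<And>i. i \<in> {1..k} \<Longrightarrow> (\<Sum>x\<in>X. T i x) = 1"
    using assms(3) by (auto simp: is_distr_def)
  have cle: "c i \<le> 1" if "i \<in> {1..k}" for i
  proof -
    have "(\<Sum>j\<in>{1..k}. c j) = c i + (\<Sum>j\<in>{1..k}-{i}. c j)"
      using that by (simp add: sum.remove)
    moreover have "0 \<le> (\<Sum>j\<in>{1..k}-{i}. c j)"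
      using assms(4) by (intro sum_nonneg) (auto intro: less_imp_le)
    ultimately show ?thesis using assms(5) by simp
  qed
  have minsum: "(\<Sum>x\<in>X. min (D x) (T i x)) = eps i" if "i \<in> {1..k}" for i
  proof -
    have "\<And>x. min (D x) (T i x) = (D x + T i x - \<bar>D x - T i x\<bar>) / 2"
      by (auto simp: min_def)
    have "(\<Sum>x\<in>X. min (D x) (T i x)) = (\<Sum>x\<in>X. (D x + T i x - \<bar>D x - T i x\<bar>) / 2)"
      by (rule sum.cong) (auto simp: min_def)
    also have "\<dots> = ((\<Sum>x\<in>X. D x) + (\<Sum>x\<in>X. T i x) - (\<Sum>x\<in>X. \<bar>D x - T i x\<bar>)) / 2"
      by (simp add: sum_divide_distrib[symmetric] sum.distrib sum_subtractf)
    also have "\<dots> = eps i"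
      using D1 T1[OF that] assms(6)[OF that] by (simp add: tv_dist_def)
    finally show ?thesis .
  qed
  have pt: "\<bar>D x - S x\<bar> \<ge> D x + S x - 2 * (\<Sum>i=1..k. min (D x) (T i x))" if "x \<in> X" for x
  proof -
    have "min (D x) (S x) \<le> (\<Sum>i=1..k. min (D x) (T i x))"
      unfolding S_def using Dn[OF that] assms(4) cle Tn[OF _ that]
      by (intro min_sum_le) (auto intro: less_imp_le)
    moreover have "\<bar>D x - S x\<bar> = D x + S x - 2 * min (D x) (S x)" by (auto simp: min_def)
    ultimately show ?thesis by linarith
  qed
  have S1: "(\<Sum>x\<in>X. S x) = 1"
  proof -
    have "(\<Sum>x\<in>X. S x) = (\<Sum>i=1..k. c i * (\<Sum>x\<in>X. T i x))"
      unfolding S_def sum_distrib_left by (rule sum.swap)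
    also have "\<dots> = (\<Sum>i=1..k. c i)" using T1 by simp
    finally show ?thesis using assms(5) by simp
  qed
  have "(\<Sum>x\<in>X. \<bar>D x - S x\<bar>) \<ge> (\<Sum>x\<in>X. D x + S x - 2 * (\<Sum>i=1..k. min (D x) (T i x)))"
    using pt by (intro sum_mono) auto
  also have "(\<Sum>x\<in>X. D x + S x - 2 * (\<Sum>i=1..k. min (D x) (T i x)))
      = 2 - 2 * (\<Sum>i=1..k. (\<Sum>x\<in>X. min (D x) (T i x)))"
  proof -
    have sw: "(\<Sum>x\<in>X. (\<Sum>i=1..k. min (D x) (T i x))) = (\<Sum>i=1..k. (\<Sum>x\<in>X. min (D x) (T i x)))"
      by (rule sum.swap)
    have "(\<Sum>x\<in>X. D x + S x - 2 * (\<Sum>i=1..k. min (D x) (T i x)))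
       = (\<Sum>x\<in>X. D x) + (\<Sum>x\<in>X. S x) - 2 * (\<Sum>x\<in>X. (\<Sum>i=1..k. min (D x) (T i x)))"
      by (simp only: sum.distrib sum_subtractf sum_distrib_left)
    then show ?thesis using D1 S1 sw by simp
  qed
  also have "(\<Sum>i=1..k. (\<Sum>x\<in>X. min (D x) (T i x))) = (\<Sum>i=1..k. eps i)"
    using minsum by simp
  finally have main: "(\<Sum>x\<in>X. \<bar>D x - S x\<bar>) \<ge> 2 - 2 * (\<Sum>i=1..k. eps i)" .
  have "(\<Sum>i=1..k. eps i) \<le> (\<Sum>i=1..k. (1 + c i) * eps i)"
  proof (intro sum_mono)
    fix i assume "i \<in> {1..k}"
    then have "0 \<le> c i * eps i" using assms(4,7) by (simp add: less_imp_le)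
    then show "eps i \<le> (1 + c i) * eps i" by (simp add: algebra_simps)
  qed
  then show ?thesis using main unfolding tv_dist_def S_def[symmetric] by simp
qed

end
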